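(* Let $\Omega\subset\mathbb{R}^n$ be open and let $L$ be the operator $$L=\Delta_x+\Delta_y+2\sum_i\frac{\partial^2}{\partial x_i\partial y_i}-4\sum_{i,j}X_iX_j\frac{\partial^2}{\partial x_i\partial y_j}$$ on $\{(x,y)\in\Omega\times\Omega:x\ne y\}$, where $X=|y-x|$ and $X_i=(y_i-x_i)/X$. Then for every smooth function $v$ on $\Omega$, with $\tilde X=(X_1,\dots,X_n)=\frac{y-x}{|y-x|}$, $$L\Big\{\big[\nabla v(y)-\nabla v(x)\big]\cdot\tilde X\Big\}=\big[\nabla\Delta v(y)-\nabla\Delta v(x)\big]\cdot\tilde X.$$ *)

theory Defs
  imports "HOL-Analysis.Analysis"
begin

definition pd :: "'n::finite \<Rightarrow> (real^'n \<Rightarrow> real) \<Rightarrow> real^'n \<Rightarrow> real" where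
  "pd i f x = deriv (\<lambda>t. f (x + t *\<^sub>R axis i 1)) 0"

fun iter_pd :: "'n::finite list \<Rightarrow> (real^'n \<Rightarrow> real) \<Rightarrow> real^'n \<Rightarrow> real" where
  "iter_pd [] f = f"
| "iter_pd (i # is) f = pd i (iter_pd is f)"

definition smooth_on :: "(real^'n::finite) set \<Rightarrow> (real^'n \<Rightarrow> real) \<Rightarrow> bool" where
  "smooth_on S f \<longleftrightarrow> (\<forall>is. \<forall>x\<in>S. iter_pd is f differentiable (at x))"

definition grad :: "(real^'n::finite \<Rightarrow> real) \<Rightarrow> real^'n \<Rightarrow> real^'n" where
  "grad f x = (\<chi> i. pd i f x)"

definition lap :: "(real^'n::finite \<Rightarrow> real) \<Rightarrow> real^'n \<Rightarrow> real" where
  "lap f x = (\<Sum>i\<in>UNIV. pd i (pd i f) x)"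

definition pdx :: "'n::finite \<Rightarrow> (real^'n \<Rightarrow> real^'n \<Rightarrow> real) \<Rightarrow> real^'n \<Rightarrow> real^'n \<Rightarrow> real" where
  "pdx i w x y = deriv (\<lambda>t. w (x + t *\<^sub>R axis i 1) y) 0"

definition pdy :: "'n::finite \<Rightarrow> (real^'n \<Rightarrow> real^'n \<Rightarrow> real) \<Rightarrow> real^'n \<Rightarrow> real^'n \<Rightarrow> real" where
  "pdy i w x y = deriv (\<lambda>t. w x (y + t *\<^sub>R axis i 1)) 0"

definition Xc :: "'n::finite \<Rightarrow> real^'n \<Rightarrow> real^'n \<Rightarrow> real" where
  "Xc i x y = (y $ i - x $ i) / norm (y - x)"

definition Lop :: "(real^'n::finite \<Rightarrow> real^'n \<Rightarrow> real) \<Rightarrow> real^'n \<Rightarrow> real^'n \<Rightarrow> real" where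
  "Lop w x y =
     (\<Sum>i\<in>UNIV. pdx i (pdx i w) x y) + (\<Sum>i\<in>UNIV. pdy i (pdy i w) x y)
     + 2 * (\<Sum>i\<in>UNIV. pdx i (pdy i w) x y)
     - 4 * (\<Sum>i\<in>UNIV. \<Sum>j\<in>UNIV. Xc i x y * Xc j x y * pdx i (pdy j w) x y)"

end

theory Submission
  imports Defs
begin


lemma LD0:
  fixes f :: "real^'n::finite \<Rightarrow> real"
  assumes D: "(f has_derivative D) (at (z + (c*t0) *\<^sub>R axis i 1))"
  shows "((\<lambda>t. f (z + (c*t) *\<^sub>R axis i 1)) has_real_derivative c * D (axis i 1)) (at t0)"
proof -
  have l: "((\<lambda>t. z + (c*t) *\<^sub>R axis i 1) has_derivative (\<lambda>h. (c*h) *\<^sub>R axis i 1)) (at t0)"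
    by (auto intro!: derivative_eq_intros)
  have "((\<lambda>t. f (z + (c*t) *\<^sub>R axis i 1)) has_derivative (\<lambda>h. D ((c*h) *\<^sub>R axis i 1))) (at t0)"
    using has_derivative_compose[OF l D] by (simp add: o_def)
  moreover have bl: "linear D" using bounded_linear.linear[OF has_derivative_bounded_linear[OF D]] .
  have "(\<lambda>h. D ((c*h) *\<^sub>R axis i 1)) = (*) (c * D (axis i 1))"
  proof
    fix h show "D ((c*h) *\<^sub>R axis i 1) = c * D (axis i 1) * h"
      using linear.scaleR[OF bl, of "c*h" "axis i 1"] by simp
  qed
  ultimately show ?thesis unfolding has_field_derivative_def by simp
qed

lemma pd_eqD:
  fixes f :: "real^'n::finite \<Rightarrow> real"
  assumes D: "(f has_derivative D) (at q)"
  shows "pd i f q = D (axis i 1)"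
proof -
  have "((\<lambda>t. f (q + (1*t) *\<^sub>R axis i 1)) has_real_derivative 1 * D (axis i 1)) (at 0)"
    by (rule LD0) (use D in simp)
  thus ?thesis unfolding pd_def by (simp add: DERIV_imp_deriv)
qed

lemma LD:
  fixes f :: "real^'n::finite \<Rightarrow> real"
  assumes "f differentiable (at (z + (c*t0) *\<^sub>R axis i 1))"
  shows "((\<lambda>t. f (z + (c*t) *\<^sub>R axis i 1)) has_real_derivative c * pd i f (z + (c*t0) *\<^sub>R axis i 1)) (at t0)"
proof -
  obtain D where D: "(f has_derivative D) (at (z + (c*t0) *\<^sub>R axis i 1))"
    using assms unfolding differentiable_def by blast
  show ?thesis using LD0[OF D] pd_eqD[OF D] by simp
qed

lemma LD1:
  fixes f :: "real^'n::finite \<Rightarrow> real"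
  assumes "f differentiable (at (z + t0 *\<^sub>R axis i 1))"
  shows "((\<lambda>t. f (z + t *\<^sub>R axis i 1)) has_real_derivative pd i f (z + t0 *\<^sub>R axis i 1)) (at t0)"
  using LD[of f z 1 t0 i] assms by simp

lemma line_open:
  fixes S :: "(real^'n::finite) set"
  assumes "open S"
  shows "open {t::real. z + (c*t) *\<^sub>R axis i 1 \<in> S}"
proof -
  have "{t::real. z + (c*t) *\<^sub>R axis i 1 \<in> S} = (\<lambda>t. z + (c*t) *\<^sub>R axis i 1) -` S" by auto
  moreover have "open ((\<lambda>t::real. z + (c*t) *\<^sub>R axis i 1) -` S)"
    by (rule continuous_open_vimage[OF assms]) (intro continuous_intros)
  ultimately show ?thesis by simp
qed

lemma pd_cong:
  fixes f g :: "real^'n::finite \<Rightarrow> real"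
  assumes "open S" "z \<in> S" "\<And>q. q \<in> S \<Longrightarrow> f q = g q"
  shows "pd i f z = pd i g z"
  unfolding pd_def
proof (rule deriv_cong_ev[OF _ refl])
  show "\<forall>\<^sub>F x in nhds 0. f (z + x *\<^sub>R axis i 1) = g (z + x *\<^sub>R axis i 1)"
    unfolding eventually_nhds
    using line_open[OF assms(1), of z 1 i] assms(2,3) by (intro exI[of _ "{t::real. z + (1*t) *\<^sub>R axis i 1 \<in> S}"]) auto
qed

lemma norm_two:
  fixes e d :: "real^'n::finite"
  assumes "norm e = 1" "norm d = 1"
  shows "norm (a *\<^sub>R e + b *\<^sub>R d) \<le> \<bar>a\<bar> + \<bar>b\<bar>"
  using norm_triangle_ineq[of "a *\<^sub>R e" "b *\<^sub>R d"] assms by simp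

lemma mvt2d:
  fixes f :: "real^'n::finite \<Rightarrow> real"
  assumes S: "ball z \<delta> \<subseteq> S" and h: "0 < h" "2*h < \<delta>"
    and df: "\<And>q. q\<in>S \<Longrightarrow> f differentiable (at q) \<and> pd i f differentiable (at q)"
  shows "\<exists>p\<in>ball z \<delta>. f (z + h *\<^sub>R axis i 1 + h *\<^sub>R axis j 1) - f (z + h *\<^sub>R axis i 1)
           - f (z + h *\<^sub>R axis j 1) + f z = h^2 * pd j (pd i f) p"
proof -
  define e where "e = (axis i 1 :: real^'n)"
  define d where "d = (axis j 1 :: real^'n)"
  have ne: "norm e = 1" "norm d = 1" unfolding e_def d_def by (simp_all)
  have inb: "z + a *\<^sub>R e + b *\<^sub>R d \<in> ball z \<delta>" if "0 \<le> a" "a \<le> h" "0 \<le> b" "b \<le> h" for a b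
  proof -
    have "norm (a *\<^sub>R e + b *\<^sub>R d) \<le> \<bar>a\<bar> + \<bar>b\<bar>" by (rule norm_two[OF ne])
    moreover have "dist z (z + a *\<^sub>R e + b *\<^sub>R d) = norm (a *\<^sub>R e + b *\<^sub>R d)"
      by (simp only: dist_norm norm_minus_commute[of z]) (simp add: add.assoc)
    ultimately show ?thesis using that h by simp
  qed
  define g where "g s = f (z + h *\<^sub>R d + s *\<^sub>R e) - f (z + s *\<^sub>R e)" for s
  have dg: "DERIV g s :> pd i f (z + h *\<^sub>R d + s *\<^sub>R e) - pd i f (z + s *\<^sub>R e)"
    if "0 \<le> s" "s \<le> h" for s
    unfolding g_def e_def
  proof (intro DERIV_diff LD1)
    show "f differentiable at (z + h *\<^sub>R d + s *\<^sub>R axis i 1)"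
      using df S inb[of s h] that h by (auto simp: e_def add_ac)
    show "f differentiable at (z + s *\<^sub>R axis i 1)"
      using df S inb[of s 0] that h by (auto simp: e_def add_ac)
  qed
  obtain \<xi> where xi: "0 < \<xi>" "\<xi> < h" "g h - g 0 = (h - 0) * (pd i f (z + h *\<^sub>R d + \<xi> *\<^sub>R e) - pd i f (z + \<xi> *\<^sub>R e))"
    using MVT2[OF h(1) dg] by auto
  define \<phi> where "\<phi> t = pd i f (z + \<xi> *\<^sub>R e + t *\<^sub>R d)" for t
  have dphi: "DERIV \<phi> t :> pd j (pd i f) (z + \<xi> *\<^sub>R e + t *\<^sub>R d)" if "0 \<le> t" "t \<le> h" for t
    unfolding \<phi>_def d_def
    by (rule LD1) (use df S inb[of \<xi> t] that xi in \<open>auto simp: d_def\<close>)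
  obtain \<eta> where eta: "0 < \<eta>" "\<eta> < h" "\<phi> h - \<phi> 0 = (h - 0) * pd j (pd i f) (z + \<xi> *\<^sub>R e + \<eta> *\<^sub>R d)"
    using MVT2[OF h(1) dphi] by auto
  have "f (z + h *\<^sub>R axis i 1 + h *\<^sub>R axis j 1) - f (z + h *\<^sub>R axis i 1)
           - f (z + h *\<^sub>R axis j 1) + f z = g h - g 0"
    unfolding g_def e_def d_def by (simp add: add_ac)
  also have "\<dots> = h * (\<phi> h - \<phi> 0)" using xi(3) unfolding \<phi>_def by (simp add: add_ac)
  also have "\<dots> = h^2 * pd j (pd i f) (z + \<xi> *\<^sub>R e + \<eta> *\<^sub>R d)"
    using eta(3) by (simp add: power2_eq_square)
  finally have "f (z + h *\<^sub>R axis i 1 + h *\<^sub>R axis j 1) - f (z + h *\<^sub>R axis i 1)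
           - f (z + h *\<^sub>R axis j 1) + f z = h^2 * pd j (pd i f) (z + \<xi> *\<^sub>R e + \<eta> *\<^sub>R d)" .
  moreover have "z + \<xi> *\<^sub>R e + \<eta> *\<^sub>R d \<in> ball z \<delta>" using inb[of \<xi> \<eta>] xi eta by simp
  ultimately show ?thesis by blast
qed


lemma schwarz:
  fixes f :: "real^'n::finite \<Rightarrow> real"
  assumes S: "open S" "z \<in> S"
    and df: "\<And>q. q\<in>S \<Longrightarrow> f differentiable (at q) \<and> pd i f differentiable (at q) \<and> pd j f differentiable (at q)"
    and c1: "pd j (pd i f) differentiable (at z)" and c2: "pd i (pd j f) differentiable (at z)"
  shows "pd j (pd i f) z = pd i (pd j f) z"
proof (rule ccontr)
  define A where "A = pd j (pd i f) z"
  define B where "B = pd i (pd j f) z"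
  assume "pd j (pd i f) z \<noteq> pd i (pd j f) z"
  hence AB: "A \<noteq> B" by (simp add: A_def B_def)
  define \<epsilon> where "\<epsilon> = \<bar>A - B\<bar> / 2"
  have ep: "\<epsilon> > 0" using AB by (simp add: \<epsilon>_def)
  have cc1: "continuous (at z) (pd j (pd i f))" using c1 differentiable_imp_continuous_within by blast
  have cc2: "continuous (at z) (pd i (pd j f))" using c2 differentiable_imp_continuous_within by blast
  obtain d1 where d1: "d1 > 0" "\<And>q. dist q z < d1 \<Longrightarrow> dist (pd j (pd i f) q) A < \<epsilon>"
    using cc1 ep unfolding continuous_at_eps_delta A_def by blast
  obtain d2 where d2: "d2 > 0" "\<And>q. dist q z < d2 \<Longrightarrow> dist (pd i (pd j f) q) B < \<epsilon>"
    using cc2 ep unfolding continuous_at_eps_delta B_def by blast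
  obtain d3 where d3: "d3 > 0" "ball z d3 \<subseteq> S" using S openE by blast
  define \<delta> where "\<delta> = min d1 (min d2 d3)"
  have dp: "\<delta> > 0" using d1 d2 d3 by (simp add: \<delta>_def)
  define h where "h = \<delta> / 3"
  have h: "0 < h" "2*h < \<delta>" using dp by (auto simp: h_def)
  have bS: "ball z \<delta> \<subseteq> S" using d3 by (auto simp: \<delta>_def)
  have df2: "\<And>q. q\<in>S \<Longrightarrow> f differentiable (at q) \<and> pd i f differentiable (at q)" using df by simp
  have df3: "\<And>q. q\<in>S \<Longrightarrow> f differentiable (at q) \<and> pd j f differentiable (at q)" using df by simp
  obtain p where p: "p \<in> ball z \<delta>" "f (z + h *\<^sub>R axis i 1 + h *\<^sub>R axis j 1) - f (z + h *\<^sub>R axis i 1)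
           - f (z + h *\<^sub>R axis j 1) + f z = h^2 * pd j (pd i f) p"
    using mvt2d[OF bS h, of f i j] df2 by blast
  obtain q where q: "q \<in> ball z \<delta>" "f (z + h *\<^sub>R axis j 1 + h *\<^sub>R axis i 1) - f (z + h *\<^sub>R axis j 1)
           - f (z + h *\<^sub>R axis i 1) + f z = h^2 * pd i (pd j f) q"
    using mvt2d[OF bS h, of f j i] df3 by blast
  have "h^2 * pd j (pd i f) p = h^2 * pd i (pd j f) q"
  proof -
    have "z + h *\<^sub>R axis j 1 + h *\<^sub>R axis i 1 = z + h *\<^sub>R axis i 1 + h *\<^sub>R axis j 1" by (simp add: add_ac)
    note ee = this
    have "f (z + h *\<^sub>R axis i 1 + h *\<^sub>R axis j 1) - f (z + h *\<^sub>R axis j 1)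
           - f (z + h *\<^sub>R axis i 1) + f z = h^2 * pd i (pd j f) q" using q(2) unfolding ee .
    then show ?thesis using p(2) by linarith
  qed
  hence eq: "pd j (pd i f) p = pd i (pd j f) q" using h by simp
  have "dist p z < d1" "dist q z < d2" using p(1) q(1) by (auto simp: \<delta>_def dist_commute)
  hence "\<bar>pd j (pd i f) p - A\<bar> < \<epsilon>" "\<bar>pd i (pd j f) q - B\<bar> < \<epsilon>"
    using d1(2) d2(2) by (auto simp: dist_real_def)
  hence "\<bar>A - B\<bar> < 2 * \<epsilon>" using eq by linarith
  thus False by (simp add: \<epsilon>_def)
qed



definition Dl :: "real \<Rightarrow> real \<Rightarrow> 'n::finite \<Rightarrow> (real^'n \<Rightarrow> real^'n \<Rightarrow> real) \<Rightarrow> real^'n \<Rightarrow> real^'n \<Rightarrow> real" where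
  "Dl c1 c2 i w x y = deriv (\<lambda>t. w (x + (c1*t) *\<^sub>R axis i 1) (y + (c2*t) *\<^sub>R axis i 1)) 0"

lemma pdx_Dl: "pdx i w = Dl 1 0 i w" by (intro ext) (simp add: pdx_def Dl_def)
lemma pdy_Dl: "pdy i w = Dl 0 1 i w" by (intro ext) (simp add: pdy_def Dl_def)

lemma LDz_eq:
  fixes f :: "real^'n::finite \<Rightarrow> real"
  shows "f differentiable (at z) \<Longrightarrow> D = c * pd i f z \<Longrightarrow> ((\<lambda>t. f (z + (c*t) *\<^sub>R axis i 1)) has_real_derivative D) (at 0)"
  using LD[of f z c 0 i] by simp

lemma line_diff: "(y + (c2*t) *\<^sub>R e) - (x + (c1*t) *\<^sub>R e) = (y - x) + ((c2 - c1)*t) *\<^sub>R e" for y x e :: "real^'n::finite"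
  by (simp add: algebra_simps)

context
  fixes \<Omega> :: "(real^'n::finite) set" and P \<gamma> :: "'n \<Rightarrow> real^'n \<Rightarrow> real" and \<delta> :: "'n \<Rightarrow> 'n \<Rightarrow> real^'n \<Rightarrow> real"
  assumes Om: "open \<Omega>"
    and P1: "\<And>k q. q \<in> \<Omega> \<Longrightarrow> P k differentiable (at q)"
    and P2: "\<And>k j q. q \<in> \<Omega> \<Longrightarrow> pd j (P k) differentiable (at q)"
    and G0: "\<And>k b. b \<noteq> 0 \<Longrightarrow> \<gamma> k differentiable (at b)"
    and G1: "\<And>k j b. b \<noteq> 0 \<Longrightarrow> pd j (\<gamma> k) b = \<delta> k j b"
    and G1d: "\<And>k j b. b \<noteq> 0 \<Longrightarrow> \<delta> k j differentiable (at b)"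
begin

lemma FD:
  assumes x: "x \<in> \<Omega>" and y: "y \<in> \<Omega>" and xy: "x \<noteq> y"
  shows "Dl c1 c2 i (\<lambda>x y. \<Sum>k\<in>UNIV. (P k y - P k x) * \<gamma> k (y - x)) x y =
    (\<Sum>k\<in>UNIV. (c2 * pd i (P k) y - c1 * pd i (P k) x) * \<gamma> k (y - x) + (c2 - c1) * (P k y - P k x) * \<delta> k i (y - x))"
proof -
  have yx: "y - x \<noteq> 0" using xy by simp
  have fe: "(\<lambda>t. (\<lambda>x y. \<Sum>k\<in>UNIV. (P k y - P k x) * \<gamma> k (y - x)) (x + (c1*t) *\<^sub>R axis i 1) (y + (c2*t) *\<^sub>R axis i 1))
     = (\<lambda>t. \<Sum>k\<in>UNIV. (P k (y + (c2*t) *\<^sub>R axis i 1) - P k (x + (c1*t) *\<^sub>R axis i 1)) * \<gamma> k ((y - x) + ((c2-c1)*t) *\<^sub>R axis i 1))"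
    by (simp only: line_diff)
  have "((\<lambda>t. \<Sum>k\<in>UNIV. (P k (y + (c2*t) *\<^sub>R axis i 1) - P k (x + (c1*t) *\<^sub>R axis i 1)) * \<gamma> k ((y - x) + ((c2-c1)*t) *\<^sub>R axis i 1))
      has_real_derivative (\<Sum>k\<in>UNIV. (c2 * pd i (P k) y - c1 * pd i (P k) x) * \<gamma> k (y - x) + (c2 - c1) * (P k y - P k x) * \<delta> k i (y - x))) (at 0)"
    by (rule derivative_eq_intros LDz_eq P1 G0 x y yx refl | simp add: G1[OF yx] algebra_simps)+
  thus ?thesis unfolding Dl_def fe by (rule DERIV_imp_deriv)
qed


lemma SD:
  assumes x: "x \<in> \<Omega>" and y: "y \<in> \<Omega>" and xy: "x \<noteq> y"
  shows "Dl ca cb i (Dl da db j (\<lambda>x y. \<Sum>k\<in>UNIV. (P k y - P k x) * \<gamma> k (y - x))) x y =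
    (\<Sum>k\<in>UNIV. (db*cb * pd i (pd j (P k)) y - da*ca * pd i (pd j (P k)) x) * \<gamma> k (y-x)
       + (cb-ca) * (db * pd j (P k) y - da * pd j (P k) x) * \<delta> k i (y-x)
       + (db - da) * (cb * pd i (P k) y - ca * pd i (P k) x) * \<delta> k j (y-x)
       + (db-da)*(cb-ca)*(P k y - P k x) * pd i (\<delta> k j) (y-x))"
proof -
  have yx: "y - x \<noteq> 0" using xy by simp
  define e where "e = (axis i 1 :: real^'n)"
  define T where "T = {t. x + (ca*t) *\<^sub>R axis i 1 \<in> \<Omega>} \<inter> {t. y + (cb*t) *\<^sub>R axis i 1 \<in> \<Omega>}
     \<inter> {t. (y - x) + ((cb-ca)*t) *\<^sub>R axis i 1 \<in> -{0}}"
  have oT: "open T" unfolding T_def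
    by (intro open_Int line_open Om open_Compl closed_singleton)
  have T0: "0 \<in> T" unfolding T_def using x y yx by simp
  define E where "E t = (\<Sum>k\<in>UNIV. (db * pd j (P k) (y + (cb*t) *\<^sub>R axis i 1) - da * pd j (P k) (x + (ca*t) *\<^sub>R axis i 1)) * \<gamma> k ((y - x) + ((cb-ca)*t) *\<^sub>R axis i 1)
       + (db - da) * (P k (y + (cb*t) *\<^sub>R axis i 1) - P k (x + (ca*t) *\<^sub>R axis i 1)) * \<delta> k j ((y - x) + ((cb-ca)*t) *\<^sub>R axis i 1))" for t
  have EE: "E t = Dl da db j (\<lambda>x y. \<Sum>k\<in>UNIV. (P k y - P k x) * \<gamma> k (y - x)) (x + (ca*t) *\<^sub>R axis i 1) (y + (cb*t) *\<^sub>R axis i 1)"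
    if "t \<in> T" for t
  proof -
    have a: "x + (ca*t) *\<^sub>R axis i 1 \<in> \<Omega>" "y + (cb*t) *\<^sub>R axis i 1 \<in> \<Omega>"
      and b: "(y - x) + ((cb-ca)*t) *\<^sub>R axis i 1 \<noteq> 0" using that unfolding T_def by auto
    have c: "x + (ca*t) *\<^sub>R axis i 1 \<noteq> y + (cb*t) *\<^sub>R axis i 1"
    proof
      assume "x + (ca*t) *\<^sub>R axis i 1 = y + (cb*t) *\<^sub>R axis i 1"
      hence "(y + (cb*t) *\<^sub>R axis i 1) - (x + (ca*t) *\<^sub>R axis i 1) = 0" by simp
      thus False using b line_diff[of y cb t "axis i 1" x ca] by simp
    qed
    show ?thesis unfolding FD[OF a c] E_def line_diff ..
  qed
  have "(E has_real_derivative (\<Sum>k\<in>UNIV. (db*cb * pd i (pd j (P k)) y - da*ca * pd i (pd j (P k)) x) * \<gamma> k (y-x)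
       + (cb-ca) * (db * pd j (P k) y - da * pd j (P k) x) * \<delta> k i (y-x)
       + (db - da) * (cb * pd i (P k) y - ca * pd i (P k) x) * \<delta> k j (y-x)
       + (db-da)*(cb-ca)*(P k y - P k x) * pd i (\<delta> k j) (y-x))) (at 0)"
    unfolding E_def
    by (rule derivative_eq_intros LDz_eq P1 P2 G0 G1d x y yx refl | simp add: G1[OF yx] algebra_simps)+
  hence "((\<lambda>t. Dl da db j (\<lambda>x y. \<Sum>k\<in>UNIV. (P k y - P k x) * \<gamma> k (y - x)) (x + (ca*t) *\<^sub>R axis i 1) (y + (cb*t) *\<^sub>R axis i 1))
    has_real_derivative (\<Sum>k\<in>UNIV. (db*cb * pd i (pd j (P k)) y - da*ca * pd i (pd j (P k)) x) * \<gamma> k (y-x)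
       + (cb-ca) * (db * pd j (P k) y - da * pd j (P k) x) * \<delta> k i (y-x)
       + (db - da) * (cb * pd i (P k) y - ca * pd i (P k) x) * \<delta> k j (y-x)
       + (db-da)*(cb-ca)*(P k y - P k x) * pd i (\<delta> k j) (y-x))) (at 0)"
    by (rule has_field_derivative_transform_within_open[OF _ oT T0]) (rule EE)
  thus ?thesis unfolding Dl_def[of ca cb i] by (rule DERIV_imp_deriv)
qed

end


lemma LDz1_eq:
  fixes f :: "real^'n::finite \<Rightarrow> real"
  shows "f differentiable (at z) \<Longrightarrow> D = pd i f z \<Longrightarrow> ((\<lambda>t. f (z + t *\<^sub>R axis i 1)) has_real_derivative D) (at 0)"
  using LD[of f z 1 0 i] by simp

lemma pd_norm: 
  fixes b :: "real^'n::finite"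
  assumes "b \<noteq> 0" shows "pd i norm b = b $ i / norm b"
  using pd_eqD[OF has_derivative_norm[OF assms], of i] by (simp add: inner_axis' sgn_div_norm divide_inverse mult.commute)

lemma nth_diff: "(\<lambda>v::real^'n::finite. v $ k) differentiable (at b)"
  using bounded_linear_imp_differentiable[OF bounded_linear_vec_nth] .

lemma pd_nth: "pd i (\<lambda>v::real^'n::finite. v $ k) b = (if k = i then 1 else 0)"
proof -
  have "((\<lambda>v::real^'n. v$k) has_derivative (\<lambda>v. v$k)) (at b)"
    by (rule bounded_linear_imp_has_derivative[OF bounded_linear_vec_nth])
  from pd_eqD[OF this] show ?thesis by (simp add: axis_def)
qed

definition gam :: "'n::finite \<Rightarrow> real^'n \<Rightarrow> real" where
  "gam k b = (1 / norm b) * b $ k"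

definition gam1 :: "'n::finite \<Rightarrow> 'n \<Rightarrow> real^'n \<Rightarrow> real" where
  "gam1 k j b = (if j = k then 1 else 0) / norm b - b $ k * b $ j / norm b ^ 3"

definition gam2 :: "'n::finite \<Rightarrow> 'n \<Rightarrow> 'n \<Rightarrow> real^'n \<Rightarrow> real" where
  "gam2 k j i b = - (if j = k then 1 else 0) * b $ i / norm b ^ 3
      - ((if i = k then 1 else 0) * b $ j + b $ k * (if i = j then 1 else 0)) / norm b ^ 3
      + 3 * b $ k * b $ j * b $ i / norm b ^ 5"

lemma gam_d: "b \<noteq> 0 \<Longrightarrow> gam k differentiable (at b)"
  unfolding gam_def by (intro derivative_intros nth_diff) auto

lemma gam1_d: "b \<noteq> 0 \<Longrightarrow> gam1 k j differentiable (at b)"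
  unfolding gam1_def by (intro derivative_intros nth_diff) auto

lemma gam_pd: assumes "b \<noteq> 0" shows "pd j (gam k) b = gam1 k j b"
proof -
  have "((\<lambda>t. gam k (b + t *\<^sub>R axis j 1)) has_real_derivative gam1 k j b) (at 0)"
    unfolding gam_def
    by (rule derivative_eq_intros LDz1_eq nth_diff differentiable_norm_at assms refl
        | simp add: assms pd_norm pd_nth gam1_def field_simps power2_eq_square power3_eq_cube)+
  thus ?thesis unfolding pd_def by (rule DERIV_imp_deriv)
qed

lemma gam1_pd: assumes "b \<noteq> 0" shows "pd i (gam1 k j) b = gam2 k j i b"
proof -
  have "((\<lambda>t. gam1 k j (b + t *\<^sub>R axis i 1)) has_real_derivative gam2 k j i b) (at 0)"
    unfolding gam1_def
    by (rule derivative_eq_intros LDz1_eq nth_diff differentiable_norm_at assms refl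
        | simp add: assms pd_norm pd_nth gam2_def field_simps power2_eq_square power3_eq_cube
        | simp add: eval_nat_numeral field_simps)+
  thus ?thesis unfolding pd_def by (rule DERIV_imp_deriv)
qed

lemma norm_sq_sum: "norm (b::real^'n::finite) ^ 2 = (\<Sum>i\<in>UNIV. b $ i * b $ i)"
  by (simp add: power2_norm_eq_inner inner_vec_def)

lemma E1: assumes "b \<noteq> 0" shows "(\<Sum>i\<in>UNIV. b $ i * gam1 k i b) = 0"
proof -
  have r: "norm b \<noteq> 0" using assms by simp
  have "(\<Sum>i\<in>UNIV. b $ i * gam1 k i b) = (\<Sum>i\<in>UNIV. b $ i * (if i = k then 1 else 0)) / norm b
     - b $ k * (\<Sum>i\<in>UNIV. b $ i * b $ i) / norm b ^ 3"
    unfolding gam1_def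
    by (simp add: right_diff_distrib sum_subtractf sum_divide_distrib sum_distrib_left mult.assoc mult.left_commute)
  also have "\<dots> = b $ k / norm b - b $ k * norm b ^ 2 / norm b ^ 3"
    by (simp add: norm_sq_sum if_distrib cong: if_cong)
  also have "\<dots> = 0" using r by (simp add: power2_eq_square power3_eq_cube)
  finally show ?thesis .
qed

lemma sum4: "(\<Sum>i\<in>A. \<Sum>j\<in>B. - a i j / r - (b i j + c i j) / r + 3 * d i j / q)
   = - (\<Sum>i\<in>A. \<Sum>j\<in>B. a i j) / r - ((\<Sum>i\<in>A. \<Sum>j\<in>B. b i j) + (\<Sum>i\<in>A. \<Sum>j\<in>B. c i j)) / r
     + 3 * (\<Sum>i\<in>A. \<Sum>j\<in>B. d i j) / (q::real)"
  by (simp add: sum.distrib sum_subtractf sum_divide_distrib sum_negf sum_distrib_left add_divide_distrib)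

lemma E2: assumes "b \<noteq> 0" shows "(\<Sum>i\<in>UNIV. \<Sum>j\<in>UNIV. b $ i * b $ j * gam2 k j i b) = 0"
proof -
  have r: "norm b \<noteq> 0" using assms by simp
  define s where "s = (\<Sum>i\<in>UNIV. b $ i * b $ i)"
  have s: "s = norm b ^ 2" unfolding s_def by (simp add: norm_sq_sum)
  have "(\<Sum>i\<in>UNIV. \<Sum>j\<in>UNIV. b $ i * b $ j * gam2 k j i b)
      = (\<Sum>i\<in>UNIV. \<Sum>j\<in>UNIV. - (if j = k then b $ i * b $ j * b $ i else 0) / norm b ^ 3
          - ((if i = k then b $ i * b $ j * b $ j else 0) + (if i = j then b $ i * b $ j * b $ k else 0)) / norm b ^ 3
          + 3 * (b $ k * (b $ j * b $ j) * (b $ i * b $ i)) / norm b ^ 5)"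
    unfolding gam2_def by (intro sum.cong refl) (simp add: field_simps)
  also have "\<dots> = - (\<Sum>i\<in>UNIV. \<Sum>j\<in>UNIV. (if j = k then b $ i * b $ j * b $ i else 0)) / norm b ^ 3
      - ((\<Sum>i\<in>UNIV. \<Sum>j\<in>UNIV. (if i = k then b $ i * b $ j * b $ j else 0))
         + (\<Sum>i\<in>UNIV. \<Sum>j\<in>UNIV. (if i = j then b $ i * b $ j * b $ k else 0))) / norm b ^ 3
      + 3 * (\<Sum>i\<in>UNIV. \<Sum>j\<in>UNIV. b $ k * (b $ j * b $ j) * (b $ i * b $ i)) / norm b ^ 5"
    by (rule sum4)
  also have "(\<Sum>i\<in>UNIV. \<Sum>j\<in>UNIV. (if j = k then b $ i * b $ j * b $ i else 0)) = b $ k * s"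
    unfolding s_def by (simp add: sum_distrib_left mult_ac)
  also have "(\<Sum>i\<in>UNIV. \<Sum>j\<in>UNIV. (if i = k then b $ i * b $ j * b $ j else 0)) = b $ k * s"
  proof -
    have "(\<Sum>i\<in>UNIV. \<Sum>j\<in>UNIV. (if i = k then b $ i * b $ j * b $ j else 0))
        = (\<Sum>i\<in>UNIV. if i = k then (\<Sum>j\<in>UNIV. b $ i * b $ j * b $ j) else 0)"
      by (intro sum.cong refl) auto
    thus ?thesis unfolding s_def by (simp add: sum_distrib_left mult_ac)
  qed
  also have "(\<Sum>i\<in>UNIV. \<Sum>j\<in>UNIV. (if i = j then b $ i * b $ j * b $ k else 0)) = b $ k * s"
  proof -
    have "(\<Sum>i\<in>UNIV. \<Sum>j\<in>UNIV. (if i = j then b $ i * b $ j * b $ k else 0))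
        = (\<Sum>i\<in>UNIV. b $ i * b $ i * b $ k)"
      by (intro sum.cong refl) (simp add: if_distrib cong: if_cong)
    thus ?thesis unfolding s_def by (simp add: sum_distrib_left mult_ac)
  qed
  also have "(\<Sum>i\<in>UNIV. \<Sum>j\<in>UNIV. b $ k * (b $ j * b $ j) * (b $ i * b $ i)) = b $ k * s * s"
    unfolding s_def by (simp add: sum_distrib_left sum_distrib_right mult_ac)
  finally show ?thesis using r unfolding s by (simp add: field_simps power2_eq_square power3_eq_cube eval_nat_numeral)
qed



lemma pd_sum:
  fixes f :: "'i::finite \<Rightarrow> real^'n::finite \<Rightarrow> real"
  assumes "\<And>i. f i differentiable (at q)"
  shows "pd k (\<lambda>z. \<Sum>i\<in>UNIV. f i z) q = (\<Sum>i\<in>UNIV. pd k (f i) q)"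
proof -
  have "((\<lambda>t. \<Sum>i\<in>UNIV. f i (q + t *\<^sub>R axis k 1)) has_real_derivative (\<Sum>i\<in>UNIV. pd k (f i) q)) (at 0)"
    by (intro DERIV_sum LDz1_eq assms refl)
  thus ?thesis unfolding pd_def[of k "\<lambda>z. \<Sum>i\<in>UNIV. f i z"] by (rule DERIV_imp_deriv)
qed

lemma sum3:
  fixes X g p q :: "'a \<Rightarrow> real" and h :: "'a \<Rightarrow> 'a \<Rightarrow> real"
  shows "(\<Sum>i\<in>A. \<Sum>j\<in>A. X i * X j * (- p j * g i - q i * g j - c * h j i))
    = - ((\<Sum>i\<in>A. X i * g i) * (\<Sum>j\<in>A. X j * p j)) - (\<Sum>i\<in>A. X i * q i) * (\<Sum>j\<in>A. X j * g j)
      - c * (\<Sum>i\<in>A. \<Sum>j\<in>A. X i * X j * h j i)"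
proof -
  have "(\<Sum>i\<in>A. \<Sum>j\<in>A. X i * X j * (- p j * g i - q i * g j - c * h j i))
     = (\<Sum>i\<in>A. \<Sum>j\<in>A. - (X i * g i * (X j * p j)) - X i * q i * (X j * g j) - c * (X i * X j * h j i))"
    by (intro sum.cong refl) (simp add: algebra_simps)
  also have "\<dots> = - (\<Sum>i\<in>A. \<Sum>j\<in>A. X i * g i * (X j * p j)) - (\<Sum>i\<in>A. \<Sum>j\<in>A. X i * q i * (X j * g j))
      - c * (\<Sum>i\<in>A. \<Sum>j\<in>A. X i * X j * h j i)"
    by (simp add: sum_subtractf sum_negf sum_distrib_left[of c])
  also have "\<dots> = - ((\<Sum>i\<in>A. X i * g i) * (\<Sum>j\<in>A. X j * p j)) - (\<Sum>i\<in>A. X i * q i) * (\<Sum>j\<in>A. X j * g j)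
      - c * (\<Sum>i\<in>A. \<Sum>j\<in>A. X i * X j * h j i)"
    by (simp only: sum_product)
  finally show ?thesis .
qed

theorem lemma2p2:
  fixes \<Omega> :: "(real^'n::finite) set" and v :: "real^'n \<Rightarrow> real"
  assumes "open \<Omega>" and "smooth_on \<Omega> v"
    and "x \<in> \<Omega>" and "y \<in> \<Omega>" and "x \<noteq> y"
  shows "Lop (\<lambda>x y. (grad v y - grad v x) \<bullet> ((1 / norm (y - x)) *\<^sub>R (y - x))) x y
       = (grad (lap v) y - grad (lap v) x) \<bullet> ((1 / norm (y - x)) *\<^sub>R (y - x))"
proof -
  define P where "P k = pd k v" for k
  have D: "\<And>ls q. q \<in> \<Omega> \<Longrightarrow> iter_pd ls v differentiable (at q)"
    using assms(2) unfolding smooth_on_def by blast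
  have P1: "\<And>k q. q \<in> \<Omega> \<Longrightarrow> P k differentiable (at q)"
    using D unfolding P_def by (metis iter_pd.simps)
  have P2: "\<And>k j q. q \<in> \<Omega> \<Longrightarrow> pd j (P k) differentiable (at q)"
    using D unfolding P_def by (metis iter_pd.simps)
  have a0: "y - x \<noteq> 0" using assms(5) by simp
  define W where "W = (\<lambda>x y. \<Sum>k\<in>UNIV. (P k y - P k x) * gam k (y - x))"
  have Weq: "(\<lambda>x y. (grad v y - grad v x) \<bullet> ((1 / norm (y - x)) *\<^sub>R (y - x))) = W"
    unfolding W_def by (intro ext) (simp add: inner_vec_def grad_def P_def gam_def mult_ac)
  have SDi: "Dl ca cb i (Dl da db j W) x y =
    (\<Sum>k\<in>UNIV. (db*cb * pd i (pd j (P k)) y - da*ca * pd i (pd j (P k)) x) * gam k (y-x)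
       + (cb-ca) * (db * pd j (P k) y - da * pd j (P k) x) * gam1 k i (y-x)
       + (db - da) * (cb * pd i (P k) y - ca * pd i (P k) x) * gam1 k j (y-x)
       + (db-da)*(cb-ca)*(P k y - P k x) * pd i (gam1 k j) (y-x))" for ca cb i da db j
    unfolding W_def
    by (rule SD[where \<Omega>=\<Omega> and P=P and \<gamma>=gam and \<delta>=gam1])
       (use assms(5) in \<open>auto simp: gam_pd intro: P1 P2 gam_d gam1_d assms(1,3,4)\<close>)
  have S1: "Dl 1 0 i (Dl 1 0 i W) x y + Dl 0 1 i (Dl 0 1 i W) x y + 2 * Dl 1 0 i (Dl 0 1 i W) x y
     = (\<Sum>k\<in>UNIV. (pd i (pd i (P k)) y - pd i (pd i (P k)) x) * gam k (y - x))" for i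
  proof -
    note e1 = SDi[where ca=1 and cb=0 and da=1 and db=0 and i=i and j=i]
    note e2 = SDi[where ca=0 and cb=1 and da=0 and db=1 and i=i and j=i]
    note e3 = SDi[where ca=1 and cb=0 and da=0 and db=1 and i=i and j=i]
    show ?thesis unfolding e1 e2 e3 by (simp add: sum.distrib[symmetric] sum_distrib_left algebra_simps)
  qed
  have S2a: "Dl 1 0 i (Dl 0 1 j W) x y = (\<Sum>k\<in>UNIV. - pd j (P k) y * gam1 k i (y - x)
       - pd i (P k) x * gam1 k j (y - x) - (P k y - P k x) * gam2 k j i (y - x))" for i j
    unfolding SDi by (intro sum.cong refl) (simp add: gam1_pd[OF a0] algebra_simps)
  define X where "X i = (y - x) $ i / norm (y - x)" for i
  have Xc: "Xc i x y = X i" for i by (simp add: Xc_def X_def)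
  have XE1: "(\<Sum>i\<in>UNIV. X i * gam1 k i (y - x)) = 0" for k
  proof -
    have "(\<Sum>i\<in>UNIV. X i * gam1 k i (y - x)) = (\<Sum>i\<in>UNIV. (y - x) $ i * gam1 k i (y - x)) / norm (y - x)"
      unfolding X_def by (simp add: sum_divide_distrib)
    thus ?thesis using E1[OF a0] by simp
  qed
  have XE2: "(\<Sum>i\<in>UNIV. \<Sum>j\<in>UNIV. X i * X j * gam2 k j i (y - x)) = 0" for k
  proof -
    have "(\<Sum>i\<in>UNIV. \<Sum>j\<in>UNIV. X i * X j * gam2 k j i (y - x))
       = (\<Sum>i\<in>UNIV. \<Sum>j\<in>UNIV. (y - x) $ i * (y - x) $ j * gam2 k j i (y - x)) / (norm (y - x))^2"
      unfolding X_def by (simp add: sum_divide_distrib power2_eq_square)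
    thus ?thesis using E2[OF a0] by simp
  qed
  have S2: "(\<Sum>i\<in>UNIV. \<Sum>j\<in>UNIV. X i * X j * Dl 1 0 i (Dl 0 1 j W) x y) = 0"
  proof -
    have "(\<Sum>i\<in>UNIV. \<Sum>j\<in>UNIV. X i * X j * Dl 1 0 i (Dl 0 1 j W) x y)
      = (\<Sum>i\<in>UNIV. \<Sum>j\<in>UNIV. \<Sum>k\<in>UNIV. X i * X j * (- pd j (P k) y * gam1 k i (y - x)
       - pd i (P k) x * gam1 k j (y - x) - (P k y - P k x) * gam2 k j i (y - x)))"
      unfolding S2a by (simp add: sum_distrib_left)
    also have "\<dots> = (\<Sum>i\<in>UNIV. \<Sum>k\<in>UNIV. \<Sum>j\<in>UNIV. X i * X j * (- pd j (P k) y * gam1 k i (y - x)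
       - pd i (P k) x * gam1 k j (y - x) - (P k y - P k x) * gam2 k j i (y - x)))"
      by (intro sum.cong refl sum.swap)
    also have "\<dots> = (\<Sum>k\<in>UNIV. \<Sum>i\<in>UNIV. \<Sum>j\<in>UNIV. X i * X j * (- pd j (P k) y * gam1 k i (y - x)
       - pd i (P k) x * gam1 k j (y - x) - (P k y - P k x) * gam2 k j i (y - x)))"
      by (rule sum.swap)
    also have "\<dots> = 0"
    proof (rule sum.neutral, rule ballI)
      fix k :: 'n
      have "(\<Sum>i\<in>UNIV. \<Sum>j\<in>UNIV. X i * X j * (- pd j (P k) y * gam1 k i (y - x)
       - pd i (P k) x * gam1 k j (y - x) - (P k y - P k x) * gam2 k j i (y - x)))
       = - ((\<Sum>i\<in>UNIV. X i * gam1 k i (y - x)) * (\<Sum>j\<in>UNIV. X j * pd j (P k) y))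
         - (\<Sum>i\<in>UNIV. X i * pd i (P k) x) * (\<Sum>j\<in>UNIV. X j * gam1 k j (y - x))
         - (P k y - P k x) * (\<Sum>i\<in>UNIV. \<Sum>j\<in>UNIV. X i * X j * gam2 k j i (y - x))"
        by (rule sum3)
      thus "(\<Sum>i\<in>UNIV. \<Sum>j\<in>UNIV. X i * X j * (- pd j (P k) y * gam1 k i (y - x)
       - pd i (P k) x * gam1 k j (y - x) - (P k y - P k x) * gam2 k j i (y - x))) = 0"
        by (simp only: XE1 XE2)
    qed
    finally show ?thesis .
  qed
  have lapeq: "lap v = (\<lambda>z. \<Sum>i\<in>UNIV. pd i (pd i v) z)" by (intro ext) (simp add: lap_def)
  have sym1: "pd k (pd i v) q = pd i (pd k v) q" if "q \<in> \<Omega>" for i k q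
    by (rule schwarz[OF assms(1) that]) (use D[where ls="[]"] D[where ls="[i]"] D[where ls="[k]"] D[where ls="[k,i]"] D[where ls="[i,k]"] that in auto)
  have lapd: "pd k (lap v) z = (\<Sum>i\<in>UNIV. pd i (pd i (P k)) z)" if z: "z \<in> \<Omega>" for k z
  proof -
    have "pd k (lap v) z = (\<Sum>i\<in>UNIV. pd k (pd i (pd i v)) z)"
      unfolding lapeq
    proof (rule pd_sum)
      fix i show "pd i (pd i v) differentiable (at z)" using D[where ls="[i,i]" and q=z] z by simp
    qed
    also have "\<dots> = (\<Sum>i\<in>UNIV. pd i (pd k (pd i v)) z)"
    proof (intro sum.cong refl)
      fix i
      show "pd k (pd i (pd i v)) z = pd i (pd k (pd i v)) z"
        by (rule schwarz[OF assms(1) z]) (use D[where ls="[i]"] D[where ls="[i,i]"] D[where ls="[k,i]"] D[where ls="[k,i,i]"] D[where ls="[i,k,i]"] z in auto)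
    qed
    also have "\<dots> = (\<Sum>i\<in>UNIV. pd i (pd i (P k)) z)"
      unfolding P_def by (intro sum.cong refl pd_cong[OF assms(1) z] sym1)
    finally show ?thesis .
  qed
  have "Lop W x y = (\<Sum>i\<in>UNIV. Dl 1 0 i (Dl 1 0 i W) x y + Dl 0 1 i (Dl 0 1 i W) x y + 2 * Dl 1 0 i (Dl 0 1 i W) x y)
      - 4 * (\<Sum>i\<in>UNIV. \<Sum>j\<in>UNIV. X i * X j * Dl 1 0 i (Dl 0 1 j W) x y)"
    unfolding Lop_def pdx_Dl pdy_Dl Xc by (simp add: sum.distrib sum_distrib_left)
  also have "\<dots> = (\<Sum>i\<in>UNIV. \<Sum>k\<in>UNIV. (pd i (pd i (P k)) y - pd i (pd i (P k)) x) * gam k (y - x))"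
    unfolding S1 S2 by simp
  also have "\<dots> = (\<Sum>k\<in>UNIV. (pd k (lap v) y - pd k (lap v) x) * gam k (y - x))"
    by (subst sum.swap) (simp add: lapd assms(3,4) sum_subtractf[symmetric] sum_distrib_right)
  also have "\<dots> = (grad (lap v) y - grad (lap v) x) \<bullet> ((1 / norm (y - x)) *\<^sub>R (y - x))"
    by (simp add: inner_vec_def grad_def gam_def mult_ac)
  finally show ?thesis unfolding Weq .
qed


end
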